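(* Let $M$ be a model. (1) For every history formula $\varphi$ of CTL*KΔ, every history $h$ and every observation record $r$ that stops at $h$: $h,r\models\varphi$ iff $\mathit{last}(h),\mathit{IS}(h,r),o(h,r)\models_I\varphi$. (2) For every path formula $\psi$, every path $\pi$, every $n\in\mathbb N$ and every observation record $r$ that stops at $n$: $\pi,n,r\models\psi$ iff $\pi_{\ge n},\ \mathit{IS}(\pi_{\le n},r),\ o(\pi_{\le n},r)\models_I\psi$.
   Context: Fix a countably infinite set $\mathit{AP}$ of atomic propositions and a finite nonempty set $\mathit{Obs}$ of observations. For a word $w$ we write $w_i$ for its letter at position $i$ (positions start at $0$), $w_{\le i}$ for its prefix ending at position $i$, $w_{\ge i}$ for its suffix starting at position $i$, $|w|$ for the length of a finite word, and $\mathit{last}(w)$ for the last letter of a finite word; $w\preceq w'$ means $w$ is a prefix of $w'$. Syntax of CTL*KΔ (single agent): history formulas $\varphi::=p\mid\neg\varphi\mid\varphi\wedge\varphi\mid\mathbf A\psi\mid\mathbf K\varphi\mid\Delta^{o}\varphi$ and path formulas $\psi::=\varphi\mid\neg\psi\mid\psi\wedge\psi\mid\mathbf X\psi\mid\psi\,\mathbf U\,\psi$, with $p\in\mathit{AP}$ and $o\in\mathit{Obs}$; the formulas of the logic are the history formulas. A model is $M=(\mathit{AP}_f,S,T,V,\{\sim_o\}_{o\in\mathit{Obs}},s_\iota,o_\iota)$ where $\mathit{AP}_f\subseteq\mathit{AP}$ is finite, $S$ is a finite set of states, $T\subseteq S\times S$ is left-total, $V:S\to 2^{\mathit{AP}_f}$,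 each $\sim_o$ is an equivalence relation on $S$, $s_\iota\in S$ and $o_\iota\in\mathit{Obs}$. A path is an infinite sequence $\pi=s_0s_1\dots$ of states with $s_i\,T\,s_{i+1}$ for all $i$ (starting at any state); a history is a finite nonempty prefix of a path. An observation record is a finite word over $\mathit{Obs}\times\mathbb N$; $\epsilon$ is the empty record, $r\cdot(o,n)$ is $r$ with $(o,n)$ appended, and $r_{=n}$ is the subword of $r$ consisting of the pairs whose second component is $n$. The record $r$ stops at $n$ if $r_{=m}$ is empty for all $m>n$, and stops at a history $h$ if it stops at $|h|-1$. The list $\mathit{ol}(r,n)$ is defined by $\mathit{ol}(r,0)=o_\iota\cdot o_1\cdots o_k$ if $r_{=0}=(o_1,0)\cdots(o_k,0)$, and $\mathit{ol}(r,n+1)=\mathit{last}(\mathit{ol}(r,n))\cdot o_1\cdots o_k$ if $r_{=n+1}=(o_1,n+1)\cdots(o_k,n+1)$. Two histories are equivalent, $h\approx_r h'$, if $|h|=|h'|$ and for every $i<|h|$ and every $o$ occurring in $\mathit{ol}(r,i)$, $h_i\sim_o h'_i$. Natural semantics: for a history $h$ and record $r$: $h,r\models p$ iff $p\in V(\mathit{last}(h))$; $h,r\models\neg\varphi$ iff not $h,r\models\varphi$; $h,r\models\varphi_1\wedge\varphi_2$ iff both hold; $h,r\models\mathbf A\psi$ iff for all paths $\pi$ with $h\preceq\pi$, $\pi,|h|-1,r\models\psi$; $h,r\models\mathbf K\varphi$ iff $h',r\models\varphi$ for all histories $h'$ with $h'\approx_r h$; $h,r\models\Delta^o\varphi$ iff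 $h,r\cdot(o,|h|-1)\models\varphi$. For a path $\pi$, $n\in\mathbb N$ and record $r$: $\pi,n,r\models\varphi$ iff $\pi_{\le n},r\models\varphi$; negation and conjunction as usual; $\pi,n,r\models\mathbf X\psi$ iff $\pi,n+1,r\models\psi$; $\pi,n,r\models\psi_1\mathbf U\psi_2$ iff there is $m\ge n$ with $\pi,m,r\models\psi_2$ and $\pi,k,r\models\psi_1$ for all $n\le k<m$. For $I\subseteq S$, $T(I)=\{s'\mid\exists s\in I,\ s\,T\,s'\}$; $[s]_o=\{s'\mid s\sim_o s'\}$. The information set is $\mathit{IS}(h,r)=\{\mathit{last}(h')\mid h'\text{ a history with }h'\approx_r h\}$. Updates: $U_T(I,s',o)=T(I)\cap[s']_o$ and $U_\Delta(I,s,o')=I\cap[s]_{o'}$. $o(h,r)$ denotes the last element of $\mathit{ol}(r,|h|-1)$. Alternative semantics, for $s\in S$, $I\subseteq S$, $o\in\mathit{Obs}$: $s,I,o\models_I p$ iff $p\in V(s)$; negation and conjunction as usual; $s,I,o\models_I\mathbf A\psi$ iff for every path $\pi$ with $\pi_0=s$, $\pi,I,o\models_I\psi$; $s,I,o\models_I\mathbf K\varphi$ iff $s',I,o\models_I\varphi$ for all $s'\in I$; $s,I,o\models_I\Delta^{o'}\varphi$ iff $s,U_\Delta(I,s,o'),o'\models_I\varphi$. For a path $\pi$: $\pi,I,o\models_I\varphi$ iff $\pi_0,I,o\models_I\varphi$; negation and conjunction as usual; $\pi,I,o\models_I\mathbf X\psi$ iff $\pi_{\ge1},U_T(I,\pi_1,o),o\models_I\psi$;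 $\pi,I,o\models_I\psi_1\mathbf U\psi_2$ iff there is $n\ge0$ with $\pi_{\ge n},U_T^n(I,\pi,o),o\models_I\psi_2$ and $\pi_{\ge m},U_T^m(I,\pi,o),o\models_I\psi_1$ for all $0\le m<n$, where $U_T^0(I,\pi,o)=I$ and $U_T^{n+1}(I,\pi,o)=U_T(U_T^n(I,\pi,o),\pi_{n+1},o)$. *)

theory Defs
  imports Main "HOL-Library.Countable"
begin

datatype ('p, 'ob) hform =
    HProp 'p
  | HNot "('p, 'ob) hform"
  | HAnd "('p, 'ob) hform" "('p, 'ob) hform"
  | HA "('p, 'ob) pform"
  | HK "('p, 'ob) hform"
  | HDelta 'ob "('p, 'ob) hform"
and ('p, 'ob) pform =
    PH "('p, 'ob) hform"
  | PNot "('p, 'ob) pform"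
  | PAnd "('p, 'ob) pform" "('p, 'ob) pform"
  | PX "('p, 'ob) pform"
  | PU "('p, 'ob) pform" "('p, 'ob) pform"

text \<open>States form a finite type 's (S = UNIV), observations a finite type 'ob.\<close>

record ('p, 's, 'ob) model =
  APf :: "'p set"
  Trans :: "'s \<Rightarrow> 's \<Rightarrow> bool"
  Val :: "'s \<Rightarrow> 'p set"
  Eqv :: "'ob \<Rightarrow> 's \<Rightarrow> 's \<Rightarrow> bool"
  sinit :: 's
  oinit :: 'ob

definition is_model :: "('p, 's::finite, 'ob::finite) model \<Rightarrow> bool" where
  "is_model M \<longleftrightarrow> finite (APf M)
     \<and> (\<forall>s. \<exists>s'. Trans M s s')
     \<and> (\<forall>s. Val M s \<subseteq> APf M)
     \<and> (\<forall>ob. equivp (Eqv M ob))"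

definition is_path :: "('p, 's, 'ob) model \<Rightarrow> (nat \<Rightarrow> 's) \<Rightarrow> bool" where
  "is_path M \<pi> \<longleftrightarrow> (\<forall>i. Trans M (\<pi> i) (\<pi> (Suc i)))"

text \<open>Histories: finite nonempty prefixes of paths; since T is left-total these are
  exactly the nonempty lists whose consecutive elements are T-related.\<close>
definition is_history :: "('p, 's, 'ob) model \<Rightarrow> 's list \<Rightarrow> bool" where
  "is_history M h \<longleftrightarrow> (\<exists>\<pi>. is_path M \<pi> \<and> (\<exists>n. h = map \<pi> [0..<Suc n]))"

definition prefix_of :: "'s list \<Rightarrow> (nat \<Rightarrow> 's) \<Rightarrow> bool" where
  "prefix_of h \<pi> \<longleftrightarrow> (\<forall>i < length h. \<pi> i = h ! i)"

definition upto_pref :: "(nat \<Rightarrow> 's) \<Rightarrow> nat \<Rightarrow> 's list" where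
  "upto_pref \<pi> n = map \<pi> [0..<Suc n]"

definition suffix_from :: "(nat \<Rightarrow> 's) \<Rightarrow> nat \<Rightarrow> (nat \<Rightarrow> 's)" where
  "suffix_from \<pi> n = (\<lambda>i. \<pi> (n + i))"

type_synonym 'ob record_t = "('ob \<times> nat) list"

definition rec_at :: "'ob record_t \<Rightarrow> nat \<Rightarrow> 'ob record_t" where
  "rec_at r n = filter (\<lambda>p. snd p = n) r"

definition stops_at :: "'ob record_t \<Rightarrow> nat \<Rightarrow> bool" where
  "stops_at r n \<longleftrightarrow> (\<forall>m > n. rec_at r m = [])"

definition stops_at_hist :: "'ob record_t \<Rightarrow> 's list \<Rightarrow> bool" where
  "stops_at_hist r h \<longleftrightarrow> stops_at r (length h - 1)"

fun ol :: "('p, 's, 'ob) model \<Rightarrow> 'ob record_t \<Rightarrow> nat \<Rightarrow> 'ob list" where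
  "ol M r 0 = oinit M # map fst (rec_at r 0)"
| "ol M r (Suc n) = last (ol M r n) # map fst (rec_at r (Suc n))"

definition hequiv :: "('p, 's, 'ob) model \<Rightarrow> 'ob record_t \<Rightarrow> 's list \<Rightarrow> 's list \<Rightarrow> bool" where
  "hequiv M r h h' \<longleftrightarrow> length h = length h'
     \<and> (\<forall>i < length h. \<forall>ob \<in> set (ol M r i). Eqv M ob (h ! i) (h' ! i))"

definition IS :: "('p, 's, 'ob) model \<Rightarrow> 's list \<Rightarrow> 'ob record_t \<Rightarrow> 's set" where
  "IS M h r = {last h' | h'. is_history M h' \<and> hequiv M r h' h}"

definition obs_of :: "('p, 's, 'ob) model \<Rightarrow> 's list \<Rightarrow> 'ob record_t \<Rightarrow> 'ob" where
  "obs_of M h r = last (ol M r (length h - 1))"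

primrec hsat :: "('p, 's, 'ob) model \<Rightarrow> ('p, 'ob) hform \<Rightarrow> 's list \<Rightarrow> 'ob record_t \<Rightarrow> bool"
and psat :: "('p, 's, 'ob) model \<Rightarrow> ('p, 'ob) pform \<Rightarrow> (nat \<Rightarrow> 's) \<Rightarrow> nat \<Rightarrow> 'ob record_t \<Rightarrow> bool"
where
  "hsat M (HProp p) h r = (p \<in> Val M (last h))"
| "hsat M (HNot \<phi>) h r = (\<not> hsat M \<phi> h r)"
| "hsat M (HAnd \<phi>1 \<phi>2) h r = (hsat M \<phi>1 h r \<and> hsat M \<phi>2 h r)"
| "hsat M (HA \<psi>) h r = (\<forall>\<pi>. is_path M \<pi> \<and> prefix_of h \<pi> \<longrightarrow> psat M \<psi> \<pi> (length h - 1) r)"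
| "hsat M (HK \<phi>) h r = (\<forall>h'. is_history M h' \<and> hequiv M r h' h \<longrightarrow> hsat M \<phi> h' r)"
| "hsat M (HDelta ob \<phi>) h r = hsat M \<phi> h (r @ [(ob, length h - 1)])"
| "psat M (PH \<phi>) \<pi> n r = hsat M \<phi> (upto_pref \<pi> n) r"
| "psat M (PNot \<psi>) \<pi> n r = (\<not> psat M \<psi> \<pi> n r)"
| "psat M (PAnd \<psi>1 \<psi>2) \<pi> n r = (psat M \<psi>1 \<pi> n r \<and> psat M \<psi>2 \<pi> n r)"
| "psat M (PX \<psi>) \<pi> n r = psat M \<psi> \<pi> (Suc n) r"
| "psat M (PU \<psi>1 \<psi>2) \<pi> n r =
     (\<exists>m \<ge> n. psat M \<psi>2 \<pi> m r \<and> (\<forall>k. n \<le> k \<and> k < m \<longrightarrow> psat M \<psi>1 \<pi> k r))"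

definition Timg :: "('p, 's, 'ob) model \<Rightarrow> 's set \<Rightarrow> 's set" where
  "Timg M I = {s'. \<exists>s \<in> I. Trans M s s'}"

definition eqcls :: "('p, 's, 'ob) model \<Rightarrow> 's \<Rightarrow> 'ob \<Rightarrow> 's set" where
  "eqcls M s ob = {s'. Eqv M ob s s'}"

definition UT :: "('p, 's, 'ob) model \<Rightarrow> 's set \<Rightarrow> 's \<Rightarrow> 'ob \<Rightarrow> 's set" where
  "UT M I s' ob = Timg M I \<inter> eqcls M s' ob"

definition UD :: "('p, 's, 'ob) model \<Rightarrow> 's set \<Rightarrow> 's \<Rightarrow> 'ob \<Rightarrow> 's set" where
  "UD M I s ob' = I \<inter> eqcls M s ob'"

fun UTn :: "('p, 's, 'ob) model \<Rightarrow> nat \<Rightarrow> 's set \<Rightarrow> (nat \<Rightarrow> 's) \<Rightarrow> 'ob \<Rightarrow> 's set" where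
  "UTn M 0 I \<pi> ob = I"
| "UTn M (Suc n) I \<pi> ob = UT M (UTn M n I \<pi> ob) (\<pi> (Suc n)) ob"

primrec isat :: "('p, 's, 'ob) model \<Rightarrow> ('p, 'ob) hform \<Rightarrow> 's \<Rightarrow> 's set \<Rightarrow> 'ob \<Rightarrow> bool"
and ipsat :: "('p, 's, 'ob) model \<Rightarrow> ('p, 'ob) pform \<Rightarrow> (nat \<Rightarrow> 's) \<Rightarrow> 's set \<Rightarrow> 'ob \<Rightarrow> bool"
where
  "isat M (HProp p) s I ob = (p \<in> Val M s)"
| "isat M (HNot \<phi>) s I ob = (\<not> isat M \<phi> s I ob)"
| "isat M (HAnd \<phi>1 \<phi>2) s I ob = (isat M \<phi>1 s I ob \<and> isat M \<phi>2 s I ob)"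
| "isat M (HA \<psi>) s I ob = (\<forall>\<pi>. is_path M \<pi> \<and> \<pi> 0 = s \<longrightarrow> ipsat M \<psi> \<pi> I ob)"
| "isat M (HK \<phi>) s I ob = (\<forall>s' \<in> I. isat M \<phi> s' I ob)"
| "isat M (HDelta ob' \<phi>) s I ob = isat M \<phi> s (UD M I s ob') ob'"
| "ipsat M (PH \<phi>) \<pi> I ob = isat M \<phi> (\<pi> 0) I ob"
| "ipsat M (PNot \<psi>) \<pi> I ob = (\<not> ipsat M \<psi> \<pi> I ob)"
| "ipsat M (PAnd \<psi>1 \<psi>2) \<pi> I ob = (ipsat M \<psi>1 \<pi> I ob \<and> ipsat M \<psi>2 \<pi> I ob)"
| "ipsat M (PX \<psi>) \<pi> I ob = ipsat M \<psi> (suffix_from \<pi> 1) (UT M I (\<pi> 1) ob) ob"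
| "ipsat M (PU \<psi>1 \<psi>2) \<pi> I ob =
     (\<exists>n. ipsat M \<psi>2 (suffix_from \<pi> n) (UTn M n I \<pi> ob) ob
        \<and> (\<forall>m < n. ipsat M \<psi>1 (suffix_from \<pi> m) (UTn M m I \<pi> ob) ob))"

end

theory Submission
  imports Defs
begin

definition chain :: "('p, 's, 'ob) model \<Rightarrow> 's list \<Rightarrow> bool" where
  "chain M h \<longleftrightarrow> h \<noteq> [] \<and> (\<forall>i. Suc i < length h \<longrightarrow> Trans M (h!i) (h!Suc i))"

primrec pf :: "('p, 's, 'ob) model \<Rightarrow> 's \<Rightarrow> nat \<Rightarrow> 's" where
  "pf M s 0 = s"
| "pf M s (Suc k) = (SOME y. Trans M (pf M s k) y)"

lemma pf_path: "\<forall>s. \<exists>s'. Trans M s s' \<Longrightarrow> is_path M (pf M s)"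
  unfolding is_path_def by (simp add: someI_ex)

definition glue :: "'s list \<Rightarrow> (nat \<Rightarrow> 's) \<Rightarrow> nat \<Rightarrow> 's" where
  "glue h p i = (if i < length h - 1 then h!i else p (i - (length h - 1)))"

lemma glue_path:
  assumes "chain M h" "is_path M p" "p 0 = last h"
  shows "is_path M (glue h p)"
  unfolding is_path_def
proof
  fix i
  have ne: "h \<noteq> []" using assms(1) by (simp add: chain_def)
  have lh: "last h = h ! (length h - 1)" using ne by (simp add: last_conv_nth)
  show "Trans M (glue h p i) (glue h p (Suc i))"
  proof (cases "Suc i < length h - 1")
    case True
    then show ?thesis using assms(1) by (simp add: glue_def chain_def)
  next
    case F: False
    show ?thesis
    proof (cases "Suc i = length h - 1")
      case True
      then have "Suc i < length h" using ne by simp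
      then have t: "Trans M (h!i) (h!Suc i)" using assms(1) by (simp add: chain_def)
      have e1: "glue h p i = h!i" using True by (simp add: glue_def)
      have e2: "glue h p (Suc i) = h ! Suc i" using True assms(3) lh by (simp add: glue_def)
      show ?thesis using t e1 e2 by simp
    next
      case False
      with F have "i \<ge> length h - 1" by simp
      moreover have "Trans M (p (i - (length h - 1))) (p (Suc (i - (length h - 1))))"
        using assms(2) by (simp add: is_path_def)
      ultimately show ?thesis by (simp add: glue_def Suc_diff_le)
    qed
  qed
qed

lemma glue_prefix:
  assumes "h \<noteq> []" "p 0 = last h"
  shows "prefix_of h (glue h p)"
  unfolding prefix_of_def glue_def
proof (intro allI impI)
  fix i assume "i < length h"
  then show "(if i < length h - 1 then h ! i else p (i - (length h - 1))) = h ! i"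
    using assms by (cases "i < length h - 1") (auto simp: last_conv_nth intro!: arg_cong[where f="(!) h"])
qed

lemma glue_suffix: "suffix_from (glue h p) (length h - 1) = p"
  unfolding suffix_from_def glue_def by auto

lemma hist_chain:
  assumes "is_model M"
  shows "is_history M h \<longleftrightarrow> chain M h"
proof
  assume "is_history M h"
  then obtain \<pi> n where p: "is_path M \<pi>" "h = map \<pi> [0..<Suc n]"
    unfolding is_history_def by blast
  have len: "length h = Suc n" using p(2) by (simp del: upt_Suc)
  have nth: "\<And>i. i < Suc n \<Longrightarrow> h ! i = \<pi> i" using p(2) by (simp del: upt_Suc)
  show "chain M h" unfolding chain_def
  proof (intro conjI allI impI)
    show "h \<noteq> []" using len by auto
    fix i assume "Suc i < length h"
    then have "h ! i = \<pi> i" "h ! Suc i = \<pi> (Suc i)" using nth len by auto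
    then show "Trans M (h ! i) (h ! Suc i)" using p(1) by (simp add: is_path_def)
  qed
next
  assume c: "chain M h"
  have tot: "\<forall>s. \<exists>s'. Trans M s s'" using assms by (simp add: is_model_def)
  let ?p = "glue h (pf M (last h))"
  have "is_path M ?p" using glue_path[OF c pf_path[OF tot]] by simp
  moreover have ne: "h \<noteq> []" using c by (simp add: chain_def)
  have pre: "prefix_of h ?p" using glue_prefix[OF ne] by simp
  have "h = map ?p [0..<Suc (length h - 1)]"
  proof (rule nth_equalityI)
    show "length h = length (map ?p [0..<Suc (length h - 1)])" using ne by (simp del: upt_Suc)
    fix i assume "i < length h"
    then show "h ! i = map ?p [0..<Suc (length h - 1)] ! i"
      using pre ne unfolding prefix_of_def by (simp del: upt_Suc)
  qed
  ultimately show "is_history M h" unfolding is_history_def by blast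
qed

lemma chain_snoc:
  assumes "g \<noteq> []"
  shows "chain M (g @ [s]) \<longleftrightarrow> chain M g \<and> Trans M (last g) s"
proof
  assume c: "chain M (g @ [s])"
  have "chain M g" unfolding chain_def
  proof (intro conjI allI impI)
    show "g \<noteq> []" by fact
    fix i assume "Suc i < length g"
    then show "Trans M (g!i) (g!Suc i)" using c unfolding chain_def
      by (auto simp: nth_append dest!: spec[where x=i])
  qed
  moreover have "Trans M (last g) s"
    using c assms unfolding chain_def
    by (auto simp: nth_append last_conv_nth dest!: spec[where x="length g - 1"])
  ultimately show "chain M g \<and> Trans M (last g) s" by simp
next
  assume "chain M g \<and> Trans M (last g) s"
  then show "chain M (g @ [s])" using assms unfolding chain_def
    apply (auto simp: nth_append last_conv_nth less_Suc_eq)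
    apply (subgoal_tac "length g - Suc 0 = i")
     apply simp
    apply arith
    done
qed

lemma upto_len[simp]: "length (upto_pref \<pi> n) = Suc n"
  by (simp add: upto_pref_def del: upt_Suc)

lemma upto_nth[simp]: "i \<le> n \<Longrightarrow> upto_pref \<pi> n ! i = \<pi> i"
  by (simp add: upto_pref_def nth_map_upt del: upt_Suc)

lemma upto_last[simp]: "last (upto_pref \<pi> n) = \<pi> n"
  by (simp add: upto_pref_def)

lemma upto_Suc: "upto_pref \<pi> (Suc n) = upto_pref \<pi> n @ [\<pi> (Suc n)]"
  by (simp add: upto_pref_def)

lemma upto_ne[simp]: "upto_pref \<pi> n \<noteq> []"
  by (simp add: upto_pref_def)

lemma upto_chain: "is_path M \<pi> \<Longrightarrow> chain M (upto_pref \<pi> n)"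
  by (simp add: chain_def is_path_def)

lemma prefix_upto:
  assumes "h \<noteq> []" "prefix_of h \<pi>" shows "upto_pref \<pi> (length h - 1) = h"
proof (rule nth_equalityI)
  show "length (upto_pref \<pi> (length h - 1)) = length h" using assms(1) by simp
  fix i assume "i < length (upto_pref \<pi> (length h - 1))"
  then have "i < length h" using assms(1) by simp
  then show "upto_pref \<pi> (length h - 1) ! i = h ! i"
    using assms(2) unfolding prefix_of_def by simp
qed

lemma suffix_suffix[simp]: "suffix_from (suffix_from \<pi> n) m = suffix_from \<pi> (n + m)"
  by (simp add: suffix_from_def add.assoc)

lemma suffix_0[simp]: "suffix_from \<pi> n 0 = \<pi> n"
  by (simp add: suffix_from_def)

lemma rec_at_app: "rec_at (r @ [(ob,n)]) i = rec_at r i @ (if i = n then [(ob,n)] else [])"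
  by (simp add: rec_at_def)

lemma ol_app: "i \<le> n \<Longrightarrow> ol M (r @ [(ob,n)]) i = (if i = n then ol M r i @ [ob] else ol M r i)"
proof (induction i)
  case 0
  then show ?case by (simp add: rec_at_app)
next
  case (Suc i)
  then show ?case by (cases "Suc i = n") (auto simp: rec_at_app)
qed

lemma ol_ne[simp]: "ol M r i \<noteq> []"
  by (cases i) auto

lemma ol_stop: "stops_at r n \<Longrightarrow> ol M r (Suc n) = [last (ol M r n)]"
  by (simp add: stops_at_def)

lemma stops_app: "stops_at r n \<Longrightarrow> stops_at (r @ [(ob,n)]) n"
  by (simp add: stops_at_def rec_at_app)

lemma stops_mono: "stops_at r n \<Longrightarrow> n \<le> m \<Longrightarrow> stops_at r m"
  by (simp add: stops_at_def)

lemma hequiv_sym: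
  assumes "is_model M" "hequiv M r a b" shows "hequiv M r b a"
proof -
  have "\<And>ob. symp (Eqv M ob)" using assms(1) by (simp add: is_model_def equivp_symp symp_def)
  then show ?thesis using assms(2) unfolding hequiv_def
    by (metis sympD)
qed

lemma hequiv_trans:
  assumes "is_model M" "hequiv M r a b" "hequiv M r b c" shows "hequiv M r a c"
  unfolding hequiv_def
proof (intro conjI allI impI ballI)
  have t: "\<And>ob. transp (Eqv M ob)" using assms(1) by (simp add: is_model_def equivp_transp transp_def)
  show "length a = length c" using assms unfolding hequiv_def by simp
  fix i ob assume "i < length a" "ob \<in> set (ol M r i)"
  then have "Eqv M ob (a!i) (b!i)" "Eqv M ob (b!i) (c!i)" using assms unfolding hequiv_def by auto
  then show "Eqv M ob (a!i) (c!i)" using t transpD by metis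
qed

lemma Eqv_sym: "is_model M \<Longrightarrow> Eqv M ob a b \<Longrightarrow> Eqv M ob b a"
  by (metis equivp_symp is_model_def)

lemma IS_K:
  assumes "is_model M" "hequiv M r h' h"
  shows "IS M h' r = IS M h r"
proof -
  have "\<And>g. hequiv M r g h' \<longleftrightarrow> hequiv M r g h"
    using hequiv_trans hequiv_sym assms by blast
  then show ?thesis unfolding IS_def by simp
qed

lemma hequiv_snoc:
  assumes "length g = length h"
  shows "hequiv M r (g @ [s]) (h @ [t]) \<longleftrightarrow>
         hequiv M r g h \<and> (\<forall>ob\<in>set (ol M r (length h)). Eqv M ob s t)"
proof
  assume a: "hequiv M r (g @ [s]) (h @ [t])"
  have "\<forall>i<length h. \<forall>ob\<in>set (ol M r i). Eqv M ob (g ! i) (h ! i)"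
  proof (intro allI impI ballI)
    fix i ob assume "i < length h" "ob \<in> set (ol M r i)"
    then show "Eqv M ob (g ! i) (h ! i)" using a assms unfolding hequiv_def
      by (auto simp: nth_append dest!: spec[where x=i])
  qed
  moreover have "(g @ [s]) ! length h = s" using assms by (metis nth_append_length)
  then have "\<forall>ob\<in>set (ol M r (length h)). Eqv M ob s t"
    using a assms unfolding hequiv_def
    by (auto dest!: spec[where x="length h"])
  ultimately show "hequiv M r g h \<and> (\<forall>ob\<in>set (ol M r (length h)). Eqv M ob s t)"
    using assms unfolding hequiv_def by simp
next
  assume a: "hequiv M r g h \<and> (\<forall>ob\<in>set (ol M r (length h)). Eqv M ob s t)"
  show "hequiv M r (g @ [s]) (h @ [t])" unfolding hequiv_def
  proof (intro conjI allI impI ballI)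
    show "length (g @ [s]) = length (h @ [t])" using assms by simp
    fix i ob assume i: "i < length (g @ [s])" and ob: "ob \<in> set (ol M r i)"
    show "Eqv M ob ((g @ [s]) ! i) ((h @ [t]) ! i)"
    proof (cases "i < length h")
      case True
      then show ?thesis using a assms ob unfolding hequiv_def by (auto simp: nth_append)
    next
      case False
      then have "i = length h" using i assms by simp
      moreover have "(g @ [s]) ! length h = s" using assms by (metis nth_append_length)
      ultimately show ?thesis using a assms ob by simp
    qed
  qed
qed

lemma hequiv_app:
  assumes "length h' = length h" "h \<noteq> []"
  shows "hequiv M (r @ [(ob, length h - 1)]) h' h \<longleftrightarrow>
         hequiv M r h' h \<and> Eqv M ob (last h') (last h)"
proof -
  let ?n = "length h - 1"
  have ol: "\<And>i. i < length h \<Longrightarrow> set (ol M (r @ [(ob, ?n)]) i) =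
      set (ol M r i) \<union> (if i = ?n then {ob} else {})"
    by (simp add: ol_app)
  have ne': "h' \<noteq> []" using assms by auto
  have lst: "last h' = h' ! ?n" "last h = h ! ?n" using assms ne' by (simp_all add: last_conv_nth)
  have n: "?n < length h" using assms by simp
  show ?thesis
  proof
    assume a: "hequiv M (r @ [(ob, ?n)]) h' h"
    have "hequiv M r h' h" unfolding hequiv_def
    proof (intro conjI allI impI ballI)
      show "length h' = length h" by fact
      fix i o' assume "i < length h'" "o' \<in> set (ol M r i)"
      then show "Eqv M o' (h' ! i) (h ! i)" using a ol assms unfolding hequiv_def by auto
    qed
    moreover have "Eqv M ob (last h') (last h)" using a ol[OF n] n lst unfolding hequiv_def by auto
    ultimately show "hequiv M r h' h \<and> Eqv M ob (last h') (last h)" by simp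
  next
    assume a: "hequiv M r h' h \<and> Eqv M ob (last h') (last h)"
    show "hequiv M (r @ [(ob, ?n)]) h' h" unfolding hequiv_def
    proof (intro conjI allI impI ballI)
      show "length h' = length h" by fact
      fix i o' assume i: "i < length h'" and o': "o' \<in> set (ol M (r @ [(ob, ?n)]) i)"
      show "Eqv M o' (h' ! i) (h ! i)"
      proof (cases "o' \<in> set (ol M r i)")
        case True
        then show ?thesis using a i assms unfolding hequiv_def by auto
      next
        case False
        then have "i = ?n" "o' = ob" using o' ol i assms by (auto split: if_splits)
        then show ?thesis using a lst by simp
      qed
    qed
  qed
qed

lemma IS_app:
  assumes "is_model M" "h \<noteq> []"
  shows "IS M h (r @ [(ob, length h - 1)]) = UD M (IS M h r) (last h) ob"
proof -
  have "\<And>g. hequiv M (r @ [(ob, length h - 1)]) g h \<longleftrightarrow>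
         hequiv M r g h \<and> Eqv M ob (last h) (last g)"
    using hequiv_app[OF _ assms(2)] Eqv_sym[OF assms(1)] by (metis hequiv_def)
  then show ?thesis unfolding IS_def UD_def eqcls_def by auto
qed

lemma obs_app: "h \<noteq> [] \<Longrightarrow> obs_of M h (r @ [(ob, length h - 1)]) = ob"
  by (simp add: obs_of_def ol_app)

lemma stops_hist_app: "stops_at_hist r h \<Longrightarrow> stops_at_hist (r @ [(ob, length h - 1)]) h"
  by (simp add: stops_at_hist_def stops_app)

lemma obs_Suc: assumes "stops_at r n" shows "obs_of M (upto_pref \<pi> (Suc n)) r = obs_of M (upto_pref \<pi> n) r"
  unfolding obs_of_def using ol_stop[OF assms, of M] by simp

lemma IS_Suc:
  assumes M: "is_model M" and st: "stops_at r n"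
  shows "IS M (upto_pref \<pi> (Suc n)) r = UT M (IS M (upto_pref \<pi> n) r) (\<pi> (Suc n)) (obs_of M (upto_pref \<pi> n) r)"
proof -
  let ?h = "upto_pref \<pi> n"
  let ?o = "obs_of M ?h r"
  have olS: "set (ol M r (length ?h)) = {?o}" using ol_stop[OF st, of M] by (simp add: obs_of_def)
  have hsn: "hequiv M r (g0 @ [y]) (?h @ [t]) \<longleftrightarrow> hequiv M r g0 ?h \<and> Eqv M ?o y t"
    if L: "length g0 = length ?h" for g0 y t
    using hequiv_snoc[OF L, of M r y t, unfolded olS] by simp
  show ?thesis
  proof (rule set_eqI)
    fix x
    show "x \<in> IS M (upto_pref \<pi> (Suc n)) r \<longleftrightarrow> x \<in> UT M (IS M ?h r) (\<pi> (Suc n)) ?o"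
    proof
      assume "x \<in> IS M (upto_pref \<pi> (Suc n)) r"
      then obtain g where g: "x = last g" "is_history M g" "hequiv M r g (?h @ [\<pi> (Suc n)])"
        unfolding IS_def upto_Suc by blast
      have lg: "length g = Suc (Suc n)" using g(3) by (simp add: hequiv_def)
      define g0 where "g0 = butlast g"
      have gd: "g = g0 @ [x]" using lg g(1) unfolding g0_def
        by (metis append_butlast_last_id list.size(3) nat.distinct(1))
      have l0: "length g0 = length ?h" using lg gd by simp
      have ne0: "g0 \<noteq> []" using l0 by auto
      have "chain M (g0 @ [x])" using g(2) gd hist_chain[OF M] by simp
      then have c0: "chain M g0" and tr: "Trans M (last g0) x" using chain_snoc[OF ne0] by auto
      have "hequiv M r g0 ?h \<and> Eqv M ?o x (\<pi> (Suc n))"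
        using g(3) gd hsn[OF l0] by simp
      then have "last g0 \<in> IS M ?h r" "Eqv M ?o (\<pi> (Suc n)) x"
        using c0 hist_chain[OF M] Eqv_sym[OF M] unfolding IS_def by auto
      then show "x \<in> UT M (IS M ?h r) (\<pi> (Suc n)) ?o"
        using tr unfolding UT_def Timg_def eqcls_def by auto
    next
      assume "x \<in> UT M (IS M ?h r) (\<pi> (Suc n)) ?o"
      then obtain s where s: "s \<in> IS M ?h r" "Trans M s x" "Eqv M ?o (\<pi> (Suc n)) x"
        unfolding UT_def Timg_def eqcls_def by auto
      then obtain g0 where g0: "s = last g0" "is_history M g0" "hequiv M r g0 ?h"
        unfolding IS_def by blast
      have l0: "length g0 = length ?h" using g0(3) by (simp add: hequiv_def)
      have ne0: "g0 \<noteq> []" using l0 by auto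
      have "chain M (g0 @ [x])" using chain_snoc[OF ne0] g0 s(2) hist_chain[OF M] by auto
      moreover have "hequiv M r (g0 @ [x]) (?h @ [\<pi> (Suc n)])"
        using hsn[OF l0] g0(3) s(3) Eqv_sym[OF M] by auto
      ultimately have "is_history M (g0 @ [x]) \<and> hequiv M r (g0 @ [x]) (?h @ [\<pi> (Suc n)])"
        using hist_chain[OF M] by simp
      then show "x \<in> IS M (upto_pref \<pi> (Suc n)) r"
        unfolding IS_def upto_Suc by (intro CollectI exI[of _ "g0 @ [x]"]) simp
    qed
  qed
qed

lemma IS_plus:
  assumes M: "is_model M" and st: "stops_at r n"
  shows "IS M (upto_pref \<pi> (n + m)) r = UTn M m (IS M (upto_pref \<pi> n) r) (suffix_from \<pi> n) (obs_of M (upto_pref \<pi> n) r)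
       \<and> obs_of M (upto_pref \<pi> (n + m)) r = obs_of M (upto_pref \<pi> n) r"
proof (induction m)
  case 0
  then show ?case by simp
next
  case (Suc m)
  have st': "stops_at r (n + m)" using stops_mono[OF st] by simp
  show ?case using IS_Suc[OF M st', of \<pi>] obs_Suc[OF st', of M \<pi>] Suc
    by (simp add: suffix_from_def)
qed

lemma main_ind:
  fixes M :: "('p, 's::finite, 'o::finite) model"
  assumes M: "is_model M"
  shows "\<forall>h r. is_history M h \<and> stops_at_hist r h \<longrightarrow>
            (hsat M \<phi> h r \<longleftrightarrow> isat M \<phi> (last h) (IS M h r) (obs_of M h r))"
    and "\<forall>\<pi> n r. is_path M \<pi> \<and> stops_at r n \<longrightarrow>
            (psat M \<psi> \<pi> n r \<longleftrightarrow>
             ipsat M \<psi> (suffix_from \<pi> n) (IS M (upto_pref \<pi> n) r) (obs_of M (upto_pref \<pi> n) r))"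
proof (induction \<phi> and \<psi>)
  case (HProp p)
  then show ?case by simp
next
  case (HNot \<phi>)
  then show ?case by simp
next
  case (HAnd \<phi>1 \<phi>2)
  then show ?case by simp
next
  case (HA \<psi>)
  show ?case
  proof (intro allI impI)
    fix h and r :: "'o record_t" assume a: "is_history M h \<and> stops_at_hist r h"
    let ?n = "length h - 1"
    have c: "chain M h" using a hist_chain[OF M] by simp
    then have ne: "h \<noteq> []" by (simp add: chain_def)
    have st: "stops_at r ?n" using a by (simp add: stops_at_hist_def)
    have eq: "psat M \<psi> \<pi> ?n r \<longleftrightarrow> ipsat M \<psi> (suffix_from \<pi> ?n) (IS M h r) (obs_of M h r)"
      if p: "is_path M \<pi>" "prefix_of h \<pi>" for \<pi>
      using HA[rule_format, of \<pi> r ?n] p(1) st prefix_upto[OF ne p(2)] by simp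
    show "hsat M (HA \<psi>) h r \<longleftrightarrow> isat M (HA \<psi>) (last h) (IS M h r) (obs_of M h r)"
    proof
      assume L: "hsat M (HA \<psi>) h r"
      show "isat M (HA \<psi>) (last h) (IS M h r) (obs_of M h r)"
      proof (simp, intro allI impI)
        fix p assume p: "is_path M p \<and> p 0 = last h"
        let ?q = "glue h p"
        have q: "is_path M ?q" "prefix_of h ?q" "suffix_from ?q ?n = p"
          using glue_path[OF c] glue_prefix[OF ne] glue_suffix p by auto
        have "psat M \<psi> ?q ?n r" using L q by simp
        then show "ipsat M \<psi> p (IS M h r) (obs_of M h r)" using eq[OF q(1,2)] q(3) by simp
      qed
    next
      assume R: "isat M (HA \<psi>) (last h) (IS M h r) (obs_of M h r)"
      show "hsat M (HA \<psi>) h r"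
      proof (simp, intro allI impI)
        fix p assume p: "is_path M p \<and> prefix_of h p"
        have "is_path M (suffix_from p ?n)" using p by (simp add: is_path_def suffix_from_def)
        moreover have "suffix_from p ?n 0 = last h"
          using p ne by (simp add: prefix_of_def last_conv_nth)
        ultimately show "psat M \<psi> p (length h - Suc 0) r" using R eq p by auto
      qed
    qed
  qed
next
  case (HK \<phi>)
  show ?case
  proof (intro allI impI)
    fix h and r :: "'o record_t" assume a: "is_history M h \<and> stops_at_hist r h"
    have "hsat M \<phi> h' r \<longleftrightarrow> isat M \<phi> (last h') (IS M h r) (obs_of M h r)"
      if h': "is_history M h'" "hequiv M r h' h" for h'
    proof -
      have l: "length h' = length h" using h'(2) by (simp add: hequiv_def)
      then have "stops_at_hist r h'" using a by (simp add: stops_at_hist_def)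
      moreover have "IS M h' r = IS M h r" using IS_K[OF M h'(2)] .
      moreover have "obs_of M h' r = obs_of M h r" using l by (simp add: obs_of_def)
      ultimately show ?thesis using HK[rule_format, of h' r] h'(1) by simp
    qed
    then show "hsat M (HK \<phi>) h r \<longleftrightarrow> isat M (HK \<phi>) (last h) (IS M h r) (obs_of M h r)"
      unfolding IS_def by auto
  qed
next
  case (HDelta ob \<phi>)
  show ?case
  proof (intro allI impI)
    fix h and r :: "'o record_t" assume a: "is_history M h \<and> stops_at_hist r h"
    have ne: "h \<noteq> []" using a hist_chain[OF M] by (simp add: chain_def)
    let ?r = "r @ [(ob, length h - 1)]"
    have "stops_at_hist ?r h" using stops_hist_app[of r h ob] a by simp
    then have IH: "hsat M \<phi> h ?r \<longleftrightarrow> isat M \<phi> (last h) (IS M h ?r) (obs_of M h ?r)"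
      by (rule HDelta[rule_format, OF conjI[OF conjunct1[OF a]]])
    show "hsat M (HDelta ob \<phi>) h r \<longleftrightarrow> isat M (HDelta ob \<phi>) (last h) (IS M h r) (obs_of M h r)"
      by (simp only: hsat.simps isat.simps IH IS_app[OF M ne] obs_app[OF ne])
  qed
next
  case (PH \<phi>)
  show ?case
  proof (intro allI impI)
    fix \<pi> n and r :: "'o record_t" assume a: "is_path M \<pi> \<and> stops_at r n"
    have "is_history M (upto_pref \<pi> n)" using a upto_chain hist_chain[OF M] by blast
    moreover have "stops_at_hist r (upto_pref \<pi> n)" using a by (simp add: stops_at_hist_def)
    ultimately show "psat M (PH \<phi>) \<pi> n r \<longleftrightarrow> ipsat M (PH \<phi>) (suffix_from \<pi> n)
        (IS M (upto_pref \<pi> n) r) (obs_of M (upto_pref \<pi> n) r)"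
      using PH by simp
  qed
next
  case (PNot \<psi>)
  then show ?case by simp
next
  case (PAnd \<psi>1 \<psi>2)
  then show ?case by simp
next
  case (PX \<psi>)
  show ?case
  proof (intro allI impI)
    fix \<pi> n and r :: "'o record_t" assume a: "is_path M \<pi> \<and> stops_at r n"
    have st: "stops_at r (Suc n)" using a stops_mono[of r n "Suc n"] by simp
    have e: "suffix_from \<pi> n 1 = \<pi> (Suc n)" by (simp add: suffix_from_def)
    show "psat M (PX \<psi>) \<pi> n r \<longleftrightarrow> ipsat M (PX \<psi>) (suffix_from \<pi> n)
        (IS M (upto_pref \<pi> n) r) (obs_of M (upto_pref \<pi> n) r)"
    proof -
      have IH: "psat M \<psi> \<pi> (Suc n) r \<longleftrightarrow> ipsat M \<psi> (suffix_from \<pi> (Suc n))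
          (IS M (upto_pref \<pi> (Suc n)) r) (obs_of M (upto_pref \<pi> (Suc n)) r)"
        using PX[rule_format, of \<pi> r "Suc n"] a st by blast
      have s1: "suffix_from (suffix_from \<pi> n) 1 = suffix_from \<pi> (Suc n)" by simp
      have stn: "stops_at r n" using a by simp
      have I1: "IS M (upto_pref \<pi> (Suc n)) r = UT M (IS M (upto_pref \<pi> n) r) (\<pi> (Suc n)) (obs_of M (upto_pref \<pi> n) r)"
        using IS_Suc[OF M stn] .
      have o1: "obs_of M (upto_pref \<pi> (Suc n)) r = obs_of M (upto_pref \<pi> n) r"
        using obs_Suc[OF stn] .
      show ?thesis using IH unfolding psat.simps ipsat.simps s1 e I1 o1 .

    qed
  qed
next
  case (PU \<psi>1 \<psi>2)
  show ?case
  proof (intro allI impI)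
    fix \<pi> n and r :: "'o record_t" assume a: "is_path M \<pi> \<and> stops_at r n"
    let ?I = "IS M (upto_pref \<pi> n) r"
    have st_n: "stops_at r n" using a by simp
    let ?o = "obs_of M (upto_pref \<pi> n) r"
    have k: "\<And>k. (psat M \<psi>1 \<pi> (n + k) r \<longleftrightarrow>
              ipsat M \<psi>1 (suffix_from (suffix_from \<pi> n) k) (UTn M k ?I (suffix_from \<pi> n) ?o) ?o)
           \<and> (psat M \<psi>2 \<pi> (n + k) r \<longleftrightarrow>
              ipsat M \<psi>2 (suffix_from (suffix_from \<pi> n) k) (UTn M k ?I (suffix_from \<pi> n) ?o) ?o)"
    proof -
      fix k
      have st: "stops_at r (n + k)" using a stops_mono[of r n "n + k"] by simp
      have "IS M (upto_pref \<pi> (n + k)) r = UTn M k ?I (suffix_from \<pi> n) ?o"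
           "obs_of M (upto_pref \<pi> (n + k)) r = ?o"
        using IS_plus[OF M st_n, of \<pi> k] by auto
      moreover have "suffix_from (suffix_from \<pi> n) k = suffix_from \<pi> (n + k)" by simp
      ultimately show "?thesis k" using PU(1)[rule_format, of \<pi> r "n + k"] PU(2)[rule_format, of \<pi> r "n + k"] a st
        by simp
    qed
    have L: "psat M (PU \<psi>1 \<psi>2) \<pi> n r \<longleftrightarrow>
      (\<exists>k. psat M \<psi>2 \<pi> (n + k) r \<and> (\<forall>j<k. psat M \<psi>1 \<pi> (n + j) r))"
    proof
      assume "psat M (PU \<psi>1 \<psi>2) \<pi> n r"
      then obtain m where m: "m \<ge> n" "psat M \<psi>2 \<pi> m r" "\<forall>k. n \<le> k \<and> k < m \<longrightarrow> psat M \<psi>1 \<pi> k r"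
        by auto
      show "\<exists>k. psat M \<psi>2 \<pi> (n + k) r \<and> (\<forall>j<k. psat M \<psi>1 \<pi> (n + j) r)"
        using m by (intro exI[of _ "m - n"]) auto
    next
      assume "\<exists>k. psat M \<psi>2 \<pi> (n + k) r \<and> (\<forall>j<k. psat M \<psi>1 \<pi> (n + j) r)"
      then obtain k where k: "psat M \<psi>2 \<pi> (n + k) r" "\<forall>j<k. psat M \<psi>1 \<pi> (n + j) r" by auto
      have "\<forall>j. n \<le> j \<and> j < n + k \<longrightarrow> psat M \<psi>1 \<pi> j r"
      proof (intro allI impI)
        fix j assume "n \<le> j \<and> j < n + k"
        then have "j - n < k" "n + (j - n) = j" by auto
        then show "psat M \<psi>1 \<pi> j r" using k(2) by metis
      qed
      then show "psat M (PU \<psi>1 \<psi>2) \<pi> n r" using k(1) by (simp only: psat.simps) (intro exI[of _ "n + k"] conjI; simp)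
    qed
    show "psat M (PU \<psi>1 \<psi>2) \<pi> n r \<longleftrightarrow> ipsat M (PU \<psi>1 \<psi>2) (suffix_from \<pi> n) ?I ?o"
      unfolding L using k by simp
  qed
qed

theorem mainTheorem3:
  fixes M :: "('p::countable, 's::finite, 'o::finite) model"
  assumes "infinite (UNIV :: 'p set)"
    and "is_model M"
  shows "(\<forall>(\<phi> :: ('p, 'o) hform) h r. is_history M h \<and> stops_at_hist r h \<longrightarrow>
            (hsat M \<phi> h r \<longleftrightarrow> isat M \<phi> (last h) (IS M h r) (obs_of M h r)))
       \<and> (\<forall>(\<psi> :: ('p, 'o) pform) \<pi> n r. is_path M \<pi> \<and> stops_at r n \<longrightarrow>
            (psat M \<psi> \<pi> n r \<longleftrightarrow>
             ipsat M \<psi> (suffix_from \<pi> n) (IS M (upto_pref \<pi> n) r) (obs_of M (upto_pref \<pi> n) r)))"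
proof (intro conjI allI)
  fix \<phi> :: "('p, 'o) hform" and h and r :: "'o record_t"
  show "is_history M h \<and> stops_at_hist r h \<longrightarrow>
            (hsat M \<phi> h r \<longleftrightarrow> isat M \<phi> (last h) (IS M h r) (obs_of M h r))"
    using main_ind(1)[OF assms(2), of \<phi>] by (elim allE)
next
  fix \<psi> :: "('p, 'o) pform" and \<pi> n and r :: "'o record_t"
  show "is_path M \<pi> \<and> stops_at r n \<longrightarrow>
            (psat M \<psi> \<pi> n r \<longleftrightarrow>
             ipsat M \<psi> (suffix_from \<pi> n) (IS M (upto_pref \<pi> n) r) (obs_of M (upto_pref \<pi> n) r))"
    using main_ind(2)[OF assms(2), of \<psi>] by (elim allE)
qed

end
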